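(* Let $J_3$ be the graph with vertex set $\{a,b,c,d,e,f,g,h,i,j,k\}$ whose edges are: $ab$; $ac,ad,ae,af,ag$ and $bc,bd,be,bf,bg$; $cd,de,ef,fg$; $ha,hd,he$; $ia,ie,if$; $jb,jd,je$; $kb,ke,kf$. Let $H$ be a subgraph of $J_3$ with maximum degree at most three that contains no edge incident with $a$ or $b$. Then $J_3-E(H)$ contains a copy of $K_4$, or a subgraph isomorphic to $J_1$ or to $J_2$ via an isomorphism mapping the vertices $a,b$ of $J_1$ (resp. $J_2$) to the vertices $a,b$ of $J_3$ respectively.
   Context: $J_1$ is the graph with vertex set $\{a,b,c,d,e\}$ and edge set $\{ab,ac,bc,ae,be,cd,de,ad\}$; $J_2$ is the graph with the same vertex set and edge set $\{ab,ac,bc,ae,be,cd,de,bd\}$. (In the paper, the edge $ab$ is called the handle, and the conclusion is phrased as "a subgraph isomorphic to $J_1$ or $J_2$ with handle $ab$".) *)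

theory Defs
  imports Main
begin

text \<open>Simple graphs are represented by their edge sets: an edge is a
two-element set of vertices.\<close>

datatype j3v = Va | Vb | Vc | Vd | Ve | Vf | Vg | Vh | Vi | Vj | Vk
datatype j12v = Ua | Ub | Uc | Ud | Ue

definition J3 :: "j3v set set" where
  "J3 = {{Va,Vb},
         {Va,Vc},{Va,Vd},{Va,Ve},{Va,Vf},{Va,Vg},
         {Vb,Vc},{Vb,Vd},{Vb,Ve},{Vb,Vf},{Vb,Vg},
         {Vc,Vd},{Vd,Ve},{Ve,Vf},{Vf,Vg},
         {Vh,Va},{Vh,Vd},{Vh,Ve},
         {Vi,Va},{Vi,Ve},{Vi,Vf},
         {Vj,Vb},{Vj,Vd},{Vj,Ve},
         {Vk,Vb},{Vk,Ve},{Vk,Vf}}"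

definition J1 :: "j12v set set" where
  "J1 = {{Ua,Ub},{Ua,Uc},{Ub,Uc},{Ua,Ue},{Ub,Ue},{Uc,Ud},{Ud,Ue},{Ua,Ud}}"

definition J2 :: "j12v set set" where
  "J2 = {{Ua,Ub},{Ua,Uc},{Ub,Uc},{Ua,Ue},{Ub,Ue},{Uc,Ud},{Ud,Ue},{Ub,Ud}}"

definition degree :: "'v set set \<Rightarrow> 'v \<Rightarrow> nat" where
  "degree E v = card {e \<in> E. v \<in> e}"

definition has_K4 :: "'v set set \<Rightarrow> bool" where
  "has_K4 E \<longleftrightarrow> (\<exists>S. finite S \<and> card S = 4 \<and>
      (\<forall>x\<in>S. \<forall>y\<in>S. x \<noteq> y \<longrightarrow> {x,y} \<in> E))"

definition embeds :: "('u \<Rightarrow> 'v) \<Rightarrow> 'u set set \<Rightarrow> 'v set set \<Rightarrow> bool" where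
  "embeds f P G \<longleftrightarrow> inj f \<and> (\<forall>e\<in>P. f ` e \<in> G)"

end

theory Submission
  imports Defs
begin

lemma deg4:
  assumes "finite H" "e1 \<in> H" "e2 \<in> H" "e3 \<in> H" "e4 \<in> H"
    "v \<in> e1" "v \<in> e2" "v \<in> e3" "v \<in> e4"
    "e1 \<noteq> e2" "e1 \<noteq> e3" "e1 \<noteq> e4" "e2 \<noteq> e3" "e2 \<noteq> e4" "e3 \<noteq> e4"
  shows "4 \<le> degree H v"
proof -
  have "card {e1,e2,e3,e4} \<le> card {e \<in> H. v \<in> e}"
    by (rule card_mono) (use assms in auto)
  moreover have "card {e1,e2,e3,e4} = 4" using assms by auto
  ultimately show ?thesis unfolding degree_def by simp
qed

lemma k4: assumes "{x,y} \<notin> H" "{x,y} \<in> J3" "{Va,x} \<in> J3" "{Vb,x} \<in> J3" "{Va,y} \<in> J3" "{Vb,y} \<in> J3"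
  "\<forall>e\<in>H. Va \<notin> e \<and> Vb \<notin> e" "x \<noteq> y" "x \<notin> {Va,Vb}" "y \<notin> {Va,Vb}" shows "has_K4 (J3 - H)"
  unfolding has_K4_def
proof (rule exI[of _ "{Va,Vb,x,y}"], intro conjI ballI impI)
  show "finite {Va,Vb,x,y}" by simp
  show "card {Va,Vb,x,y} = 4" using assms(8-10) by (auto simp: card_insert_if)
  have ab: "{Va,Vb} \<in> J3" by (simp add: J3_def)
  have sym: "{p,q} = {q,p}" for p q :: j3v by (rule insert_commute)
  fix p q assume p: "p \<in> {Va,Vb,x,y}" and q: "q \<in> {Va,Vb,x,y}" and pq: "p \<noteq> q"
  have J: "{p,q} \<in> J3"
    using p q pq ab assms(2-6) sym[of Va Vb] sym[of Va x] sym[of Vb x] sym[of Va y] sym[of Vb y] sym[of x y]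
    by (elim insertE emptyE) simp_all
  have N: "{p,q} \<notin> H"
    using p q pq assms(1,7) sym[of x y] by (elim insertE emptyE) auto
  show "{p,q} \<in> J3 - H" using J N by simp
qed

definition fm :: "j3v \<Rightarrow> j3v \<Rightarrow> j3v \<Rightarrow> j12v \<Rightarrow> j3v" where
  "fm x y z u = (case u of Ua \<Rightarrow> Va | Ub \<Rightarrow> Vb | Uc \<Rightarrow> x | Ud \<Rightarrow> y | Ue \<Rightarrow> z)"

lemma inj_fm: "distinct [Va,Vb,x,y,z] \<Longrightarrow> inj (fm x y z)"
  unfolding inj_def fm_def
  apply (intro allI)
  subgoal for u w by (cases u; cases w; auto)
  done

theorem lemma3:
  fixes H :: "j3v set set"
  assumes "H \<subseteq> J3"
    and "\<forall>v. degree H v \<le> 3"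
    and "\<forall>e\<in>H. Va \<notin> e \<and> Vb \<notin> e"
  shows "has_K4 (J3 - H) \<or>
         (\<exists>f. embeds f J1 (J3 - H) \<and> f Ua = Va \<and> f Ub = Vb) \<or>
         (\<exists>f. embeds f J2 (J3 - H) \<and> f Ua = Va \<and> f Ub = Vb)"
proof -
  have fin: "finite H" using assms(1) finite_subset unfolding J3_def by auto
  have nab: "{Va,x} \<notin> H" "{Vb,x} \<notin> H" for x using assms(3) by auto
  note D = deg4[OF fin]
  have dg: "\<not> 4 \<le> degree H v" for v using spec[OF assms(2), of v] by linarith
  show ?thesis
  proof (cases "{Vc,Vd} \<in> H \<and> {Vd,Ve} \<in> H \<and> {Ve,Vf} \<in> H \<and> {Vf,Vg} \<in> H")
    case False
    then consider "{Vc,Vd} \<notin> H" | "{Vd,Ve} \<notin> H" | "{Ve,Vf} \<notin> H" | "{Vf,Vg} \<notin> H" by blast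
    then have "has_K4 (J3 - H)"
    proof cases
      case 1 then show ?thesis by (rule k4) (simp_all add: J3_def assms(3))
    next
      case 2 then show ?thesis by (rule k4) (simp_all add: J3_def assms(3))
    next
      case 3 then show ?thesis by (rule k4) (simp_all add: J3_def assms(3))
    next
      case 4 then show ?thesis by (rule k4) (simp_all add: J3_def assms(3))
    qed
    then show ?thesis by blast
  next
    case True
    have c1: "\<not> ({Vh,Vd} \<in> H \<and> {Vj,Vd} \<in> H)"
      using True D[of "{Vc,Vd}" "{Vd,Ve}" "{Vh,Vd}" "{Vj,Vd}" Vd] dg by auto
    have c2: "\<not> ({Vi,Vf} \<in> H \<and> {Vk,Vf} \<in> H)"
      using True D[of "{Ve,Vf}" "{Vf,Vg}" "{Vi,Vf}" "{Vk,Vf}" Vf] dg by auto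
    have c3: "\<not> ({p,Ve} \<in> H \<and> {q,Ve} \<in> H)" if "p \<in> {Vh,Vi,Vj,Vk}" "q \<in> {Vh,Vi,Vj,Vk}" "p \<noteq> q" for p q
      using True D[of "{Vd,Ve}" "{Ve,Vf}" "{p,Ve}" "{q,Ve}" Ve] dg that by (auto simp: doubleton_eq_iff)
    have "({Vh,Vd} \<notin> H \<and> {Vh,Ve} \<notin> H) \<or> ({Vj,Vd} \<notin> H \<and> {Vj,Ve} \<notin> H) \<or>
          ({Vi,Ve} \<notin> H \<and> {Vi,Vf} \<notin> H) \<or> ({Vk,Ve} \<notin> H \<and> {Vk,Vf} \<notin> H)"
      using c1 c2 c3[of Vh Vi] c3[of Vh Vj] c3[of Vh Vk] c3[of Vi Vj] c3[of Vi Vk] c3[of Vj Vk]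
      by blast
    then show ?thesis
    proof (elim disjE)
      assume h: "{Vh,Vd} \<notin> H \<and> {Vh,Ve} \<notin> H"
      have "embeds (fm Vd Vh Ve) J1 (J3 - H)"
        unfolding embeds_def using insert_commute[of Vd Vh] inj_fm[of Vd Vh Ve] h nab
        by (simp add: J1_def fm_def) (simp add: J3_def doubleton_eq_iff)
      then show ?thesis by (auto simp: fm_def)
    next
      assume h: "{Vj,Vd} \<notin> H \<and> {Vj,Ve} \<notin> H"
      have "embeds (fm Vd Vj Ve) J2 (J3 - H)"
        unfolding embeds_def using insert_commute[of Vd Vj] inj_fm[of Vd Vj Ve] h nab
        by (simp add: J2_def fm_def) (simp add: J3_def doubleton_eq_iff)
      then show ?thesis by (auto simp: fm_def)
    next
      assume h: "{Vi,Ve} \<notin> H \<and> {Vi,Vf} \<notin> H"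
      have "embeds (fm Ve Vi Vf) J1 (J3 - H)"
        unfolding embeds_def using insert_commute[of Ve Vi] inj_fm[of Ve Vi Vf] h nab
        by (simp add: J1_def fm_def) (simp add: J3_def doubleton_eq_iff)
      then show ?thesis by (auto simp: fm_def)
    next
      assume h: "{Vk,Ve} \<notin> H \<and> {Vk,Vf} \<notin> H"
      have "embeds (fm Ve Vk Vf) J2 (J3 - H)"
        unfolding embeds_def using insert_commute[of Ve Vk] inj_fm[of Ve Vk Vf] h nab
        by (simp add: J2_def fm_def) (simp add: J3_def doubleton_eq_iff)
      then show ?thesis by (auto simp: fm_def)
    qed
  qed
qed

end
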